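(* Let $d,d'\in\mathcal D$, with notation $(\mathbf P,\mathbf r,J_\mu,J_{\mu,\sigma},\mathbf g)$ for $d$ and $(\mathbf P',\mathbf r',J'_{\mu,\sigma})$ for $d'$, and write $p(i,j),r(i),g(j)$, $p'(i,j),r'(i)$ for the entries. If $$\sum_{j\in\mathcal S}p'(i,j)g(j)+r'(i)-\beta(r'(i)-J_\mu)^2\ \ge\ \sum_{j\in\mathcal S}p(i,j)g(j)+r(i)-\beta(r(i)-J_\mu)^2\qquad\text{for all } i\in\mathcal S,$$ then $J'_{\mu,\sigma}\ge J_{\mu,\sigma}$. If moreover the inequality is strict for at least one $i\in\mathcal S$, then $J'_{\mu,\sigma}>J_{\mu,\sigma}$.
   Context: Let $\mathcal S=\{1,\dots,S\}$ be a finite state space and $\mathcal A$ a finite action set. For $i,j\in\mathcal S$, $a\in\mathcal A$, let $p^a(i,j)\ge 0$ with $\sum_{j}p^a(i,j)=1$ be transition probabilities and $r(i,a)\in\mathbb R$ rewards. A deterministic stationary policy is a map $d:\mathcal S\to\mathcal A$; $\mathcal D$ denotes the set of such policies. Under $d$, $\mathbf P^d$ is the $S\times S$ matrix with entries $p^{d(i)}(i,j)$ and $\mathbf r^d$ is the column vector with entries $r(i,d(i))$. Standing assumption: for every $d\in\mathcal D$ the chain with transition matrix $\mathbf P^d$ is irreducible, so it has a unique stationary distribution (row vector) $\boldsymbol\pi^d$, $\boldsymbol\pi^d\mathbf P^d=\boldsymbol\pi^d$, $\boldsymbol\pi^d\mathbf 1=1$, with all entries strictly positive. Define $J^d_\mu=\boldsymbol\pi^d\mathbf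 r^d$, $J^d_\sigma=\sum_i\pi^d(i)(r(i,d(i))-J^d_\mu)^2$, and for fixed $\beta>0$, $J^d_{\mu,\sigma}=J^d_\mu-\beta J^d_\sigma=\boldsymbol\pi^d\mathbf f^d$ with $f^d(i)=r(i,d(i))-\beta(r(i,d(i))-J^d_\mu)^2$. The performance potential $\mathbf g^d$ is any solution of $\mathbf g^d=\mathbf f^d-J^d_{\mu,\sigma}\mathbf 1+\mathbf P^d\mathbf g^d$ (unique up to an additive constant vector). *)

theory Defs
  imports Main "HOL-Library.Cardinality" Complex_Main
begin

(* States: a finite type 's; actions: a finite type 'a.
   Transition probabilities: p a i j = p^a(i,j); rewards: r i a = r(i,a).
   A deterministic stationary policy is d :: 's => 'a. *)

definition stochastic_kernel :: "('a \<Rightarrow> 's::finite \<Rightarrow> 's \<Rightarrow> real) \<Rightarrow> bool" where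
  "stochastic_kernel p \<longleftrightarrow> (\<forall>a i j. p a i j \<ge> 0) \<and> (\<forall>a i. (\<Sum>j\<in>UNIV. p a i j) = 1)"

definition Pmat :: "('a \<Rightarrow> 's \<Rightarrow> 's \<Rightarrow> real) \<Rightarrow> ('s \<Rightarrow> 'a) \<Rightarrow> 's \<Rightarrow> 's \<Rightarrow> real" where
  "Pmat p d i j = p (d i) i j"

definition rvec :: "('s \<Rightarrow> 'a \<Rightarrow> real) \<Rightarrow> ('s \<Rightarrow> 'a) \<Rightarrow> 's \<Rightarrow> real" where
  "rvec r d i = r i (d i)"

fun mpow :: "('s::finite \<Rightarrow> 's \<Rightarrow> real) \<Rightarrow> nat \<Rightarrow> 's \<Rightarrow> 's \<Rightarrow> real" where
  "mpow P 0 i j = (if i = j then 1 else 0)"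
| "mpow P (Suc n) i j = (\<Sum>k\<in>UNIV. mpow P n i k * P k j)"

definition irreducible_chain :: "('s::finite \<Rightarrow> 's \<Rightarrow> real) \<Rightarrow> bool" where
  "irreducible_chain P \<longleftrightarrow> (\<forall>i j. \<exists>n. mpow P n i j > 0)"

definition is_stationary :: "('s::finite \<Rightarrow> 's \<Rightarrow> real) \<Rightarrow> ('s \<Rightarrow> real) \<Rightarrow> bool" where
  "is_stationary P \<pi> \<longleftrightarrow> (\<forall>j. (\<Sum>i\<in>UNIV. \<pi> i * P i j) = \<pi> j) \<and> (\<Sum>i\<in>UNIV. \<pi> i) = 1"

(* the (unique, under irreducibility) stationary distribution pi^d *)
definition stat_dist :: "('s::finite \<Rightarrow> 's \<Rightarrow> real) \<Rightarrow> 's \<Rightarrow> real" where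
  "stat_dist P = (THE \<pi>. is_stationary P \<pi>)"

definition J_mu :: "('a \<Rightarrow> 's::finite \<Rightarrow> 's \<Rightarrow> real) \<Rightarrow> ('s \<Rightarrow> 'a \<Rightarrow> real) \<Rightarrow> ('s \<Rightarrow> 'a) \<Rightarrow> real" where
  "J_mu p r d = (\<Sum>i\<in>UNIV. stat_dist (Pmat p d) i * rvec r d i)"

definition J_sigma :: "('a \<Rightarrow> 's::finite \<Rightarrow> 's \<Rightarrow> real) \<Rightarrow> ('s \<Rightarrow> 'a \<Rightarrow> real) \<Rightarrow> ('s \<Rightarrow> 'a) \<Rightarrow> real" where
  "J_sigma p r d = (\<Sum>i\<in>UNIV. stat_dist (Pmat p d) i * (rvec r d i - J_mu p r d)\<^sup>2)"

definition J_mu_sigma :: "real \<Rightarrow> ('a \<Rightarrow> 's::finite \<Rightarrow> 's \<Rightarrow> real) \<Rightarrow> ('s \<Rightarrow> 'a \<Rightarrow> real) \<Rightarrow> ('s \<Rightarrow> 'a) \<Rightarrow> real" where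
  "J_mu_sigma \<beta> p r d = J_mu p r d - \<beta> * J_sigma p r d"

definition fvec :: "real \<Rightarrow> ('a \<Rightarrow> 's::finite \<Rightarrow> 's \<Rightarrow> real) \<Rightarrow> ('s \<Rightarrow> 'a \<Rightarrow> real) \<Rightarrow> ('s \<Rightarrow> 'a) \<Rightarrow> 's \<Rightarrow> real" where
  "fvec \<beta> p r d i = rvec r d i - \<beta> * (rvec r d i - J_mu p r d)\<^sup>2"

definition is_potential :: "real \<Rightarrow> ('a \<Rightarrow> 's::finite \<Rightarrow> 's \<Rightarrow> real) \<Rightarrow> ('s \<Rightarrow> 'a \<Rightarrow> real) \<Rightarrow> ('s \<Rightarrow> 'a) \<Rightarrow> ('s \<Rightarrow> real) \<Rightarrow> bool" where
  "is_potential \<beta> p r d g \<longleftrightarrow>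
     (\<forall>i. g i = fvec \<beta> p r d i - J_mu_sigma \<beta> p r d + (\<Sum>j\<in>UNIV. Pmat p d i j * g j))"

end

theory Submission
  imports Defs "HOL-Analysis.Analysis"
begin

definition inv_vec :: "('s::finite \<Rightarrow> 's \<Rightarrow> real) \<Rightarrow> ('s \<Rightarrow> real) \<Rightarrow> bool" where
  "inv_vec P x \<longleftrightarrow> (\<forall>j. (\<Sum>i\<in>UNIV. x i * P i j) = x j)"

definition stoch :: "('s::finite \<Rightarrow> 's \<Rightarrow> real) \<Rightarrow> bool" where
  "stoch P \<longleftrightarrow> (\<forall>i j. P i j \<ge> 0) \<and> (\<forall>i. (\<Sum>j\<in>UNIV. P i j) = 1)"

lemma mpow_nonneg: "stoch P \<Longrightarrow> mpow P n i j \<ge> 0"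
  by (induction n arbitrary: j) (auto simp: stoch_def intro!: sum_nonneg mult_nonneg_nonneg)

lemma inv_mpow:
  assumes "inv_vec P x"
  shows "(\<Sum>i\<in>UNIV. x i * mpow P n i j) = x j"
proof (induction n arbitrary: j)
  case 0
  then show ?case by (simp add: if_distrib cong: if_cong)
next
  case (Suc n)
  have "(\<Sum>i\<in>UNIV. x i * mpow P (Suc n) i j) = (\<Sum>i\<in>UNIV. \<Sum>k\<in>UNIV. x i * mpow P n i k * P k j)"
    by (simp add: sum_distrib_left mult.assoc)
  also have "\<dots> = (\<Sum>k\<in>UNIV. (\<Sum>i\<in>UNIV. x i * mpow P n i k) * P k j)"
    by (subst sum.swap) (simp add: sum_distrib_right)
  also have "\<dots> = (\<Sum>k\<in>UNIV. x k * P k j)" using Suc by simp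
  also have "\<dots> = x j" using assms by (simp add: inv_vec_def)
  finally show ?case .
qed

lemma inv_pos:
  assumes st: "stoch P" and irr: "irreducible_chain P" and iv: "inv_vec P x"
    and nn: "\<forall>i. x i \<ge> 0" and xi: "x i > 0"
  shows "x j > 0"
proof -
  obtain n where n: "mpow P n i j > 0" using irr by (auto simp: irreducible_chain_def)
  have "x i * mpow P n i j \<le> (\<Sum>k\<in>UNIV. x k * mpow P n k j)"
    by (rule member_le_sum) (auto intro!: mult_nonneg_nonneg simp: nn mpow_nonneg[OF st])
  moreover have "x i * mpow P n i j > 0" using xi n by simp
  ultimately show ?thesis using inv_mpow[OF iv] by simp
qed

lemma inv_abs:
  assumes st: "stoch P" and iv: "inv_vec P x"
  shows "inv_vec P (\<lambda>i. \<bar>x i\<bar>)"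
proof -
  have le: "\<bar>x j\<bar> \<le> (\<Sum>i\<in>UNIV. \<bar>x i\<bar> * P i j)" for j
  proof -
    have "\<bar>x j\<bar> = \<bar>\<Sum>i\<in>UNIV. x i * P i j\<bar>" using iv by (simp add: inv_vec_def)
    also have "\<dots> \<le> (\<Sum>i\<in>UNIV. \<bar>x i * P i j\<bar>)" by (rule sum_abs)
    also have "\<dots> = (\<Sum>i\<in>UNIV. \<bar>x i\<bar> * P i j)" using st by (simp add: stoch_def abs_mult)
    finally show ?thesis .
  qed
  have "(\<Sum>j\<in>UNIV. (\<Sum>i\<in>UNIV. \<bar>x i\<bar> * P i j)) = (\<Sum>i\<in>UNIV. \<bar>x i\<bar> * (\<Sum>j\<in>UNIV. P i j))"
    by (subst sum.swap) (simp add: sum_distrib_left)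
  also have "\<dots> = (\<Sum>j\<in>UNIV. \<bar>x j\<bar>)" using st by (simp add: stoch_def)
  finally have eqs: "(\<Sum>j\<in>UNIV. (\<Sum>i\<in>UNIV. \<bar>x i\<bar> * P i j) - \<bar>x j\<bar>) = 0"
    by (simp add: sum_subtractf)
  have "\<forall>j\<in>UNIV. (\<Sum>i\<in>UNIV. \<bar>x i\<bar> * P i j) - \<bar>x j\<bar> = 0"
    using sum_nonneg_eq_0_iff[of UNIV "\<lambda>j. (\<Sum>i\<in>UNIV. \<bar>x i\<bar> * P i j) - \<bar>x j\<bar>"] eqs le
    by simp
  then show ?thesis by (simp add: inv_vec_def)
qed

lemma inv_lin:
  assumes "inv_vec P x" "inv_vec P y"
  shows "inv_vec P (\<lambda>i. a * x i + b * y i)"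
  using assms by (simp add: inv_vec_def distrib_right sum.distrib sum_distrib_left[symmetric] mult.assoc)

lemma inv_sign:
  assumes st: "stoch P" and irr: "irreducible_chain P" and iv: "inv_vec P x"
  shows "(\<forall>i. x i = 0) \<or> (\<forall>i. x i > 0) \<or> (\<forall>i. x i < 0)"
proof -
  have ia: "inv_vec P (\<lambda>i. \<bar>x i\<bar>)" by (rule inv_abs[OF st iv])
  have ip: "inv_vec P (\<lambda>i. (1/2) * \<bar>x i\<bar> + (1/2) * x i)" by (rule inv_lin[OF ia iv])
  have im: "inv_vec P (\<lambda>i. (1/2) * \<bar>x i\<bar> + (-1/2) * x i)" by (rule inv_lin[OF ia iv])
  show ?thesis
  proof (cases "\<exists>i. x i > 0")
    case True
    then obtain i where "x i > 0" by blast
    have h: "(1/2) * \<bar>x j\<bar> + (1/2) * x j > 0" for j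
      by (rule inv_pos[OF st irr ip, of i]) (use \<open>x i > 0\<close> in auto)
    have "x j > 0" for j using h[of j] by (auto simp: abs_if split: if_splits)
    then show ?thesis by blast
  next
    case False
    show ?thesis
    proof (cases "\<exists>i. x i < 0")
      case True
      then obtain i where "x i < 0" by blast
      have h: "(1/2) * \<bar>x j\<bar> + (-1/2) * x j > 0" for j
        by (rule inv_pos[OF st irr im, of i]) (use \<open>x i < 0\<close> in auto)
      have "x j < 0" for j using h[of j] by (auto simp: abs_if split: if_splits)
      then show ?thesis by blast
    next
      case False2: False
      then show ?thesis using False by (meson linorder_neqE_linordered_idom)
    qed
  qed
qed

lemma inv_exists:
  fixes P :: "'s::finite \<Rightarrow> 's \<Rightarrow> real"
  assumes st: "stoch P"
  shows "\<exists>x. inv_vec P x \<and> (\<exists>i. x i \<noteq> 0)"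
proof -
  define B :: "real^'s^'s" where "B = (\<chi> i j. P i j - (if i = j then 1 else 0))"
  have "B *v (\<chi> i. 1) = 0"
    using st by (simp add: B_def matrix_vector_mult_def vec_eq_iff sum_subtractf stoch_def)
  moreover have "(\<chi> i. (1::real)) \<noteq> (0::real^'s)" by (simp add: vec_eq_iff)
  ultimately have "\<not> inj ((*v) B)" by (metis vec.inj_iff_eq_0)
  then have "det B = 0" by (simp add: det_eq_0_rank less_rank_noninjective)
  then have "det (transpose B) = 0" by simp
  then have "\<not> inj ((*v) (transpose B))" by (metis det_eq_0_rank less_rank_noninjective)
  then obtain v where v: "transpose B *v v = 0" "v \<noteq> 0" by (metis vec.inj_iff_eq_0)
  have "inv_vec P (\<lambda>i. v $ i)"
  proof (unfold inv_vec_def, intro allI)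
    fix j
    have "(\<Sum>i\<in>UNIV. (P i j - (if i = j then 1 else 0)) * v $ i) = 0"
      using v(1) by (simp add: B_def matrix_vector_mult_def vec_eq_iff transpose_def)
    moreover have "(P i j - (if i = j then 1 else 0)) * v $ i = v $ i * P i j - (if i = j then v $ i else 0)" for i
      by (simp add: algebra_simps)
    ultimately have "(\<Sum>i\<in>UNIV. v $ i * P i j - (if i = j then v $ i else 0)) = 0" by simp
    then show "(\<Sum>i\<in>UNIV. v $ i * P i j) = v $ j"
      by (simp add: sum_subtractf)
  qed
  moreover have "\<exists>i. v $ i \<noteq> 0" using v(2) by (simp add: vec_eq_iff)
  ultimately show ?thesis by blast
qed

lemma stat_props:
  assumes st: "stoch P" and irr: "irreducible_chain P"
  shows "is_stationary P (stat_dist P) \<and> (\<forall>i. stat_dist P i > 0)"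
proof -
  obtain x where x: "inv_vec P x" "\<exists>i. x i \<noteq> 0" using inv_exists[OF st] by blast
  have sgn: "(\<forall>i. x i > 0) \<or> (\<forall>i. x i < 0)" using inv_sign[OF st irr x(1)] x(2) by blast
  define s where "s = (\<Sum>i\<in>UNIV. x i)"
  have s0: "s \<noteq> 0"
  proof
    assume "s = 0"
    from sgn show False
    proof
      assume "\<forall>i. x i > 0"
      then have "s > 0" unfolding s_def by (simp add: sum_pos)
      then show False using \<open>s = 0\<close> by simp
    next
      assume "\<forall>i. x i < 0"
      then have "(\<Sum>i\<in>UNIV. - x i) > 0" by (simp add: sum_pos)
      then show False using \<open>s = 0\<close> by (simp add: s_def sum_negf)
    qed
  qed
  define \<pi> where "\<pi> = (\<lambda>i. x i / s)"
  have piinv: "inv_vec P \<pi>" using inv_lin[OF x(1) x(1), of "1/s" 0] by (simp add: \<pi>_def)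
  have "(\<Sum>i\<in>UNIV. \<pi> i) = s / s" unfolding \<pi>_def s_def by (rule sum_divide_distrib[symmetric])
  then have "(\<Sum>i\<in>UNIV. \<pi> i) = 1" using s0 by simp
  then have pist: "is_stationary P \<pi>"
    using piinv by (simp add: is_stationary_def inv_vec_def)
  have uniq: "\<pi>' = \<pi>" if "is_stationary P \<pi>'" for \<pi>'
  proof -
    have "inv_vec P (\<lambda>i. 1 * \<pi>' i + (-1) * \<pi> i)"
      by (rule inv_lin) (use that piinv in \<open>auto simp: is_stationary_def inv_vec_def\<close>)
    then have d: "inv_vec P (\<lambda>i. \<pi>' i - \<pi> i)" by simp
    have sum0: "(\<Sum>i\<in>UNIV. \<pi>' i - \<pi> i) = 0"
      using that pist by (simp add: is_stationary_def sum_subtractf)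
    have "\<forall>i. \<pi>' i - \<pi> i = 0"
    proof -
      from inv_sign[OF st irr d] consider "\<forall>i. \<pi>' i - \<pi> i = 0" | "\<forall>i. \<pi>' i - \<pi> i > 0" | "\<forall>i. \<pi>' i - \<pi> i < 0" by blast
      then show ?thesis
      proof cases
        case 2
        then have "(\<Sum>i\<in>UNIV. \<pi>' i - \<pi> i) > 0" by (simp add: sum_pos)
        then show ?thesis using sum0 by simp
      next
        case 3
        then have "(\<Sum>i\<in>UNIV. \<pi> i - \<pi>' i) > 0" by (simp add: sum_pos)
        then show ?thesis using sum0 by (simp add: sum_subtractf)
      qed auto
    qed
    then show ?thesis by auto
  qed
  have "stat_dist P = \<pi>" unfolding stat_dist_def
    using pist uniq by (rule the_equality)
  moreover have "\<forall>i. \<pi> i > 0"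
  proof
    fix i
    from sgn show "\<pi> i > 0"
    proof
      assume a: "\<forall>i. x i > 0"
      then have "s > 0" unfolding s_def by (simp add: sum_pos)
      then show ?thesis using a by (simp add: \<pi>_def)
    next
      assume a: "\<forall>i. x i < 0"
      then have "(\<Sum>i\<in>UNIV. - x i) > 0" by (simp add: sum_pos)
      then have "s < 0" by (simp add: s_def sum_negf)
      then show ?thesis using a by (simp add: \<pi>_def divide_neg_neg)
    qed
  qed
  ultimately show ?thesis using pist by simp
qed

lemma var_shift:
  fixes w v :: "'s::finite \<Rightarrow> real"
  assumes "(\<Sum>i\<in>UNIV. w i) = 1"
  shows "(\<Sum>i\<in>UNIV. w i * (v i - c)\<^sup>2)
       = (\<Sum>i\<in>UNIV. w i * (v i - (\<Sum>k\<in>UNIV. w k * v k))\<^sup>2) + ((\<Sum>k\<in>UNIV. w k * v k) - c)\<^sup>2"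
proof -
  define m where "m = (\<Sum>k\<in>UNIV. w k * v k)"
  have pt: "w i * (v i - c)\<^sup>2 = w i * (v i - m)\<^sup>2 + (2*(m - c)) * (w i * v i) - (2*(m-c)*m) * w i + (m-c)\<^sup>2 * w i" for i
    by (simp add: power2_eq_square algebra_simps)
  have "(\<Sum>i\<in>UNIV. w i * (v i - c)\<^sup>2) = (\<Sum>i\<in>UNIV. w i * (v i - m)\<^sup>2) + (2*(m - c)) * (\<Sum>i\<in>UNIV. w i * v i)
      - (2*(m-c)*m) * (\<Sum>i\<in>UNIV. w i) + (m-c)\<^sup>2 * (\<Sum>i\<in>UNIV. w i)"
    by (simp add: pt sum.distrib sum_subtractf sum_distrib_left)
  also have "\<dots> = (\<Sum>i\<in>UNIV. w i * (v i - m)\<^sup>2) + (m - c)\<^sup>2"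
    using assms by (simp add: m_def[symmetric])
  finally show ?thesis by (simp add: m_def)
qed

theorem theorem1:
  fixes p :: "'a::finite \<Rightarrow> 's::finite \<Rightarrow> 's \<Rightarrow> real"
    and r :: "'s \<Rightarrow> 'a \<Rightarrow> real"
    and \<beta> :: real
    and d d' :: "'s \<Rightarrow> 'a"
    and g :: "'s \<Rightarrow> real"
  assumes kernel: "stochastic_kernel p"
    and irred: "\<forall>e :: 's \<Rightarrow> 'a. irreducible_chain (Pmat p e)"
    and beta_pos: "\<beta> > 0"
    and pot: "is_potential \<beta> p r d g"
    and ineq: "\<forall>i. (\<Sum>j\<in>UNIV. p (d' i) i j * g j) + r i (d' i) - \<beta> * (r i (d' i) - J_mu p r d)\<^sup>2
                 \<ge> (\<Sum>j\<in>UNIV. p (d i) i j * g j) + r i (d i) - \<beta> * (r i (d i) - J_mu p r d)\<^sup>2"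
  shows "J_mu_sigma \<beta> p r d' \<ge> J_mu_sigma \<beta> p r d
      \<and> ((\<exists>i. (\<Sum>j\<in>UNIV. p (d' i) i j * g j) + r i (d' i) - \<beta> * (r i (d' i) - J_mu p r d)\<^sup>2
                 > (\<Sum>j\<in>UNIV. p (d i) i j * g j) + r i (d i) - \<beta> * (r i (d i) - J_mu p r d)\<^sup>2)
         \<longrightarrow> J_mu_sigma \<beta> p r d' > J_mu_sigma \<beta> p r d)"
proof -
  define P' where "P' = Pmat p d'"
  have st: "stoch P'" using kernel by (simp add: stoch_def stochastic_kernel_def P'_def Pmat_def)
  have ir: "irreducible_chain P'" using irred by (simp add: P'_def)
  define w where "w = stat_dist P'"
  have wst: "is_stationary P' w" and wpos: "\<forall>i. w i > 0" using stat_props[OF st ir] by (auto simp: w_def)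
  have wsum: "(\<Sum>i\<in>UNIV. w i) = 1" and wstat: "\<And>j. (\<Sum>i\<in>UNIV. w i * P' i j) = w j"
    using wst by (auto simp: is_stationary_def)
  define J where "J = J_mu p r d"
  define Jms where "Jms = J_mu_sigma \<beta> p r d"
  define L where "L i = (\<Sum>j\<in>UNIV. p (d' i) i j * g j) + r i (d' i) - \<beta> * (r i (d' i) - J)\<^sup>2" for i
  define R where "R i = (\<Sum>j\<in>UNIV. p (d i) i j * g j) + r i (d i) - \<beta> * (r i (d i) - J)\<^sup>2" for i
  have LR: "L i \<ge> R i" for i using ineq by (simp add: L_def R_def J_def)
  have Rg: "R i = g i + Jms" for i
    using pot[unfolded is_potential_def, rule_format, of i]
    by (simp add: R_def J_def Jms_def fvec_def rvec_def Pmat_def)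
  define rr where "rr i = r i (d' i)" for i
  define J' where "J' = (\<Sum>i\<in>UNIV. w i * rr i)"
  have J'eq: "J_mu p r d' = J'" by (simp add: J_mu_def J'_def w_def P'_def rvec_def rr_def)
  have Jms': "J_mu_sigma \<beta> p r d' = J' - \<beta> * (\<Sum>i\<in>UNIV. w i * (rr i - J')\<^sup>2)"
    unfolding J_mu_sigma_def J_sigma_def J'eq by (simp add: w_def P'_def rvec_def rr_def)
  have Lform: "L i = (\<Sum>j\<in>UNIV. P' i j * g j) + (rr i - \<beta> * (rr i - J)\<^sup>2)" for i
    by (simp add: L_def P'_def Pmat_def rr_def)
  have gsum: "(\<Sum>i\<in>UNIV. w i * (\<Sum>j\<in>UNIV. P' i j * g j)) = (\<Sum>j\<in>UNIV. w j * g j)"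
  proof -
    have "(\<Sum>i\<in>UNIV. w i * (\<Sum>j\<in>UNIV. P' i j * g j)) = (\<Sum>i\<in>UNIV. \<Sum>j\<in>UNIV. w i * P' i j * g j)"
      by (simp add: sum_distrib_left mult.assoc)
    also have "\<dots> = (\<Sum>j\<in>UNIV. (\<Sum>i\<in>UNIV. w i * P' i j) * g j)"
      by (subst sum.swap) (simp add: sum_distrib_right)
    also have "\<dots> = (\<Sum>j\<in>UNIV. w j * g j)" by (simp add: wstat)
    finally show ?thesis .
  qed
  have key: "(\<Sum>i\<in>UNIV. w i * (L i - R i)) = (\<Sum>i\<in>UNIV. w i * (rr i - \<beta> * (rr i - J)\<^sup>2)) - Jms"
  proof -
    have pt: "w i * (L i - R i) = w i * (\<Sum>j\<in>UNIV. P' i j * g j) + w i * (rr i - \<beta> * (rr i - J)\<^sup>2) - w i * g i - Jms * w i" for i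
      by (simp add: Lform Rg algebra_simps)
    have "(\<Sum>i\<in>UNIV. w i * (L i - R i)) = (\<Sum>i\<in>UNIV. w i * (\<Sum>j\<in>UNIV. P' i j * g j)) + (\<Sum>i\<in>UNIV. w i * (rr i - \<beta> * (rr i - J)\<^sup>2))
        - (\<Sum>i\<in>UNIV. w i * g i) - Jms * (\<Sum>i\<in>UNIV. w i)"
      by (simp only: pt sum.distrib sum_subtractf sum_distrib_left)
    then show ?thesis using gsum wsum by simp
  qed
  have var: "(\<Sum>i\<in>UNIV. w i * (rr i - J)\<^sup>2) = (\<Sum>i\<in>UNIV. w i * (rr i - J')\<^sup>2) + (J' - J)\<^sup>2"
    using var_shift[OF wsum, of rr J] by (simp add: J'_def)
  have f: "(\<Sum>i\<in>UNIV. w i * (rr i - \<beta> * (rr i - J)\<^sup>2)) = J' - \<beta> * (\<Sum>i\<in>UNIV. w i * (rr i - J)\<^sup>2)"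
    by (simp add: right_diff_distrib sum_subtractf sum_distrib_left J'_def algebra_simps)
  have main: "J_mu_sigma \<beta> p r d' = Jms + (\<Sum>i\<in>UNIV. w i * (L i - R i)) + \<beta> * (J' - J)\<^sup>2"
    using Jms' key var f by (simp add: algebra_simps)
  have nn: "(\<Sum>i\<in>UNIV. w i * (L i - R i)) \<ge> 0"
    using wpos LR by (intro sum_nonneg) (simp add: less_imp_le)
  have bj: "\<beta> * (J' - J)\<^sup>2 \<ge> 0" using beta_pos by simp
  have part1: "J_mu_sigma \<beta> p r d' \<ge> J_mu_sigma \<beta> p r d"
    using main nn bj by (simp add: Jms_def)
  have part2: "J_mu_sigma \<beta> p r d' > J_mu_sigma \<beta> p r d"
    if "\<exists>i. (\<Sum>j\<in>UNIV. p (d' i) i j * g j) + r i (d' i) - \<beta> * (r i (d' i) - J_mu p r d)\<^sup>2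
                 > (\<Sum>j\<in>UNIV. p (d i) i j * g j) + r i (d i) - \<beta> * (r i (d i) - J_mu p r d)\<^sup>2"
  proof -
    from that obtain i where "L i > R i" by (auto simp: L_def R_def J_def)
    then have pos: "w i * (L i - R i) > 0" using wpos by simp
    have "w i * (L i - R i) \<le> (\<Sum>k\<in>UNIV. w k * (L k - R k))"
      by (rule member_le_sum) (use wpos LR in \<open>auto intro!: mult_nonneg_nonneg simp: less_imp_le\<close>)
    then show ?thesis using pos main bj by (simp add: Jms_def)
  qed
  show ?thesis using part1 part2 by blast
qed

end
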